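(* Let $\lambda>1$, suppose $(P_1)$ is feasible, and let $y^*$ be an optimal solution to $\max_{y\in\mathbb{R}^{\mathcal{S}}_{\ge0}}g_\lambda(y)$. Then $\sum_{S\in\mathcal{S}}b_Sy^*_S\le\frac{\mathrm{OPT}(1)-\mathrm{OPT}(\lambda)}{\lambda-1}$.
   Context: Setting: $G=(V,E)$ undirected connected graph, costs $c_e\ge0$, a chain $\mathcal{S}$ of node sets $S_1\subsetneq\dots\subsetneq S_\ell\subsetneq V$, integers $b_S$. $E(S)$ = edges with both ends in $S$, $\delta(S)$ = edges with exactly one end in $S$, $z(F)=\sum_{e\in F}z_e$. $P_{ST}(G)=\{x\in\mathbb{R}^E_{\ge0}: x(E(S))\le|S|-1\ \forall\emptyset\ne S\subsetneq V,\ x(E)=|V|-1\}$. For $\lambda\ge1$, $(P_\lambda)$: minimize $\sum_ec_ex_e$ over $x\in P_{ST}(G)$ with $x(\delta(S))\le\lambda b_S$ for all $S\in\mathcal{S}$; $\mathrm{OPT}(\lambda)$ is its optimal value. $g_\lambda(y)=\min_{x\in P_{ST}(G)}\big(\sum_ec_ex_e+\sum_{S\in\mathcal{S}}(x(\delta(S))-\lambda b_S)y_S\big)$ for $y\in\mathbb{R}^{\mathcal{S}}_{\ge0}$. *)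

theory Defs
  imports Complex_Main
begin

definition graph_ok :: "'v set \<Rightarrow> 'v set set \<Rightarrow> bool" where
  "graph_ok V E \<longleftrightarrow> finite V \<and> (\<forall>e\<in>E. e \<subseteq> V \<and> card e = 2)"

definition connected_graph :: "'v set \<Rightarrow> 'v set set \<Rightarrow> bool" where
  "connected_graph V E \<longleftrightarrow> graph_ok V E \<and> V \<noteq> {} \<and>
     (\<forall>u\<in>V. \<forall>v\<in>V. (\<lambda>a b. {a, b} \<in> E)\<^sup>*\<^sup>* u v)"

definition inner_edges :: "'v set set \<Rightarrow> 'v set \<Rightarrow> 'v set set" where
  "inner_edges E S = {e\<in>E. e \<subseteq> S}"

definition cut_edges :: "'v set set \<Rightarrow> 'v set \<Rightarrow> 'v set set" where
  "cut_edges E S = {e\<in>E. card (e \<inter> S) = 1}"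

definition is_chain_family :: "'v set \<Rightarrow> 'v set set \<Rightarrow> bool" where
  "is_chain_family V \<S> \<longleftrightarrow> finite \<S> \<and> (\<forall>S\<in>\<S>. S \<subset> V) \<and>
     (\<forall>S\<in>\<S>. \<forall>T\<in>\<S>. S \<subseteq> T \<or> T \<subseteq> S)"

definition P_ST :: "'v set \<Rightarrow> 'v set set \<Rightarrow> ('v set \<Rightarrow> real) set" where
  "P_ST V E = {x. (\<forall>e\<in>E. x e \<ge> 0) \<and>
     (\<forall>S. S \<noteq> {} \<and> S \<subset> V \<longrightarrow> sum x (inner_edges E S) \<le> real (card S) - 1) \<and>
     sum x E = real (card V) - 1}"

definition lin_cost :: "'v set set \<Rightarrow> ('v set \<Rightarrow> real) \<Rightarrow> ('v set \<Rightarrow> real) \<Rightarrow> real" where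
  "lin_cost E c x = (\<Sum>e\<in>E. c e * x e)"

definition feas :: "'v set \<Rightarrow> 'v set set \<Rightarrow> 'v set set \<Rightarrow> ('v set \<Rightarrow> int) \<Rightarrow> real
    \<Rightarrow> ('v set \<Rightarrow> real) set" where
  "feas V E \<S> b lam = {x \<in> P_ST V E. \<forall>S\<in>\<S>. sum x (cut_edges E S) \<le> lam * real_of_int (b S)}"

definition OPT :: "'v set \<Rightarrow> 'v set set \<Rightarrow> ('v set \<Rightarrow> real) \<Rightarrow> 'v set set \<Rightarrow> ('v set \<Rightarrow> int)
    \<Rightarrow> real \<Rightarrow> real" where
  "OPT V E c \<S> b lam = Inf (lin_cost E c ` feas V E \<S> b lam)"

definition g_lag :: "'v set \<Rightarrow> 'v set set \<Rightarrow> ('v set \<Rightarrow> real) \<Rightarrow> 'v set set \<Rightarrow> ('v set \<Rightarrow> int)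
    \<Rightarrow> real \<Rightarrow> ('v set \<Rightarrow> real) \<Rightarrow> real" where
  "g_lag V E c \<S> b lam y = Inf ((\<lambda>x. lin_cost E c x +
      (\<Sum>S\<in>\<S>. (sum x (cut_edges E S) - lam * real_of_int (b S)) * y S)) ` P_ST V E)"

end

theory Submission
  imports Defs "HOL-Analysis.Analysis"
begin


definition cvx :: "('e \<Rightarrow> real) set \<Rightarrow> bool" where
  "cvx X = (\<forall>x\<in>X. \<forall>x'\<in>X. \<forall>u::real. 0 \<le> u \<and> u \<le> 1 \<longrightarrow> (\<lambda>e. u * x e + (1-u) * x' e) \<in> X)"

definition aff_on :: "('e \<Rightarrow> real) set \<Rightarrow> (('e \<Rightarrow> real) \<Rightarrow> real) \<Rightarrow> bool" where
  "aff_on X f = (\<forall>x\<in>X. \<forall>x'\<in>X. \<forall>u::real. 0 \<le> u \<and> u \<le> 1 \<longrightarrow>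
      f (\<lambda>e. u * x e + (1-u) * x' e) = u * f x + (1-u) * f x')"

lemma one_dual:
  fixes X :: "('e \<Rightarrow> real) set" and a h :: "('e \<Rightarrow> real) \<Rightarrow> real"
  assumes cX: "compact X" and cv: "cvx X" and aa: "aff_on X a" and ah: "aff_on X h"
    and ca: "continuous_on UNIV a" and ch: "continuous_on UNIV h"
    and feas: "\<exists>x\<in>X. h x \<le> 0"
    and lb: "\<And>x. x \<in> X \<Longrightarrow> h x \<le> 0 \<Longrightarrow> t \<le> a x"
    and ep: "\<epsilon> > 0"
  shows "\<exists>y\<ge>0. \<forall>x\<in>X. t - \<epsilon> \<le> a x + y * h x"
proof -
  define A where "A = (\<lambda>x. (h x, a x)) ` X"
  define C where "C = {p::real\<times>real. fst p \<le> 0 \<and> snd p \<le> t - \<epsilon>}"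
  have "compact A" unfolding A_def
    by (rule compact_continuous_image[OF _ cX]) (intro continuous_intros continuous_on_subset[OF ch] continuous_on_subset[OF ca]; simp)+
  have "convex A" unfolding convex_def A_def
  proof (clarsimp)
    fix x x' u v assume x: "x \<in> X" "x' \<in> X" and uv: "0 \<le> (u::real)" "0 \<le> v" "u + v = 1"
    hence v: "v = 1 - u" "u \<le> 1" by auto
    let ?z = "\<lambda>e. u * x e + (1-u) * x' e"
    have "?z \<in> X" using cv x uv v unfolding cvx_def by blast
    moreover have "h ?z = u * h x + v * h x'" "a ?z = u * a x + v * a x'"
      using aa ah x uv v unfolding aff_on_def by auto
    ultimately show "(u * h x + v * h x', u * a x + v * a x') \<in> (\<lambda>x. (h x, a x)) ` X"
      by (metis (no_types, lifting) image_eqI)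
  qed
  have "A \<noteq> {}" using feas A_def by auto
  have Ceq: "C = {p. inner (1::real,0::real) p \<le> 0} \<inter> {p. inner (0::real,1::real) p \<le> t - \<epsilon>}"
    unfolding C_def by (auto simp: inner_prod_def)
  have "convex C" unfolding Ceq by (intro convex_Int convex_halfspace_le)
  have "closed C" unfolding Ceq by (intro closed_Int closed_halfspace_le)
  have "A \<inter> C = {}"
  proof -
    { fix x assume "x \<in> X" "h x \<le> 0" "a x \<le> t - \<epsilon>"
      with lb ep have False by fastforce }
    thus ?thesis unfolding A_def C_def by auto
  qed
  then obtain w \<beta> where wA: "\<forall>p\<in>A. inner w p < \<beta>" and wC: "\<forall>p\<in>C. inner w p > \<beta>"
    using separating_hyperplane_compact_closed[OF \<open>convex A\<close> \<open>compact A\<close> \<open>A \<noteq> {}\<close> \<open>convex C\<close> \<open>closed C\<close>]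
    by blast
  obtain p1 q1 where w: "w = (p1, q1)" by (cases w)
  have C1: "\<And>s r. s \<le> 0 \<Longrightarrow> r \<ge> 0 \<Longrightarrow> p1 * s + q1 * (t - \<epsilon> - r) > \<beta>"
    using wC unfolding C_def w by auto
  have p1: "p1 \<le> 0"
  proof (rule ccontr)
    assume "\<not> p1 \<le> 0" hence p: "p1 > 0" by simp
    define s where "s = - (\<bar>\<beta> - q1*(t-\<epsilon>)\<bar> + 1) / p1"
    have "s \<le> 0" using p unfolding s_def by (simp add: divide_nonpos_pos)
    have "p1 * s = - (\<bar>\<beta> - q1*(t-\<epsilon>)\<bar> + 1)" using p unfolding s_def by simp
    with C1[OF \<open>s \<le> 0\<close>, of 0] show False by auto
  qed
  have q1: "q1 \<le> 0"
  proof (rule ccontr)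
    assume "\<not> q1 \<le> 0" hence q: "q1 > 0" by simp
    define r where "r = (\<bar>\<beta> - q1*(t-\<epsilon>)\<bar> + 1) / q1"
    have "r \<ge> 0" using q unfolding r_def by simp
    have "q1 * r = \<bar>\<beta> - q1*(t-\<epsilon>)\<bar> + 1" using q unfolding r_def by simp
    with C1[of 0 r] \<open>r \<ge> 0\<close> show False by (auto simp: algebra_simps)
  qed
  obtain x0 where x0: "x0 \<in> X" "h x0 \<le> 0" using feas by blast
  have "(h x0, a x0) \<in> A" using x0 A_def by auto
  hence A0: "p1 * h x0 + q1 * a x0 < \<beta>" using wA w by auto
  have C0: "q1 * (t - \<epsilon>) > \<beta>" using C1[of 0 0] by simp
  have "q1 \<noteq> 0"
  proof
    assume "q1 = 0"
    moreover have "p1 * h x0 \<ge> 0" using p1 x0 by (simp add: mult_nonpos_nonpos)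
    ultimately show False using A0 C0 by auto
  qed
  hence q: "q1 < 0" using q1 by simp
  define y where "y = p1 / q1"
  have "y \<ge> 0" unfolding y_def using p1 q by (simp add: divide_nonpos_neg)
  moreover have "\<forall>x\<in>X. t - \<epsilon> \<le> a x + y * h x"
  proof
    fix x assume "x \<in> X"
    hence "p1 * h x + q1 * a x < q1 * (t - \<epsilon>)" using wA w C0 A_def by force
    hence "q1 * (y * h x + a x) < q1 * (t - \<epsilon>)" using q unfolding y_def by (simp add: algebra_simps)
    hence "y * h x + a x > t - \<epsilon>" using q by (simp add: mult_less_cancel_left)
    thus "t - \<epsilon> \<le> a x + y * h x" by simp
  qed
  ultimately show ?thesis by blast
qed


lemma multi_dual:
  fixes I :: "'i set" and h :: "'i \<Rightarrow> ('e \<Rightarrow> real) \<Rightarrow> real" and a :: "('e \<Rightarrow> real) \<Rightarrow> real"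
  assumes "finite I"
  shows "\<And>X \<epsilon>. compact X \<Longrightarrow> cvx X \<Longrightarrow> aff_on X a \<Longrightarrow> (\<forall>i\<in>I. aff_on X (h i)) \<Longrightarrow>
    continuous_on UNIV a \<Longrightarrow> (\<forall>i\<in>I. continuous_on UNIV (h i)) \<Longrightarrow>
    (\<exists>x\<in>X. \<forall>i\<in>I. h i x \<le> 0) \<Longrightarrow> (\<forall>x\<in>X. (\<forall>i\<in>I. h i x \<le> 0) \<longrightarrow> t \<le> a x) \<Longrightarrow> \<epsilon> > 0 \<Longrightarrow>
    \<exists>y. (\<forall>i\<in>I. 0 \<le> y i) \<and> (\<forall>x\<in>X. t - \<epsilon> \<le> a x + (\<Sum>i\<in>I. y i * h i x))"
  using assms
proof (induction I rule: finite_induct)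
  case empty
  then show ?case by auto
next
  case (insert j I X \<epsilon>)
  define X' where "X' = X \<inter> {x. h j x \<le> 0}"
  have "closed {x. h j x \<le> 0}"
    using insert.prems(6) by (intro closed_Collect_le continuous_intros) auto
  hence "compact X'" unfolding X'_def using insert.prems(1) by blast
  have "cvx X'" unfolding cvx_def
  proof (intro ballI allI impI)
    fix x x' u assume B: "x \<in> X'" "x' \<in> X'" "0 \<le> (u::real) \<and> u \<le> 1"
    have A1: "(\<lambda>e. u * x e + (1 - u) * x' e) \<in> X" using insert.prems(2) B unfolding cvx_def X'_def by blast
    have "h j (\<lambda>e. u * x e + (1 - u) * x' e) = u * h j x + (1 - u) * h j x'"
      using insert.prems(4) B unfolding aff_on_def X'_def by blast
    also have "\<dots> \<le> 0" using B unfolding X'_def by (intro add_nonpos_nonpos mult_nonneg_nonpos) auto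
    finally show "(\<lambda>e. u * x e + (1 - u) * x' e) \<in> X'" using A1 unfolding X'_def by blast
  qed
  have affsub: "\<And>f. aff_on X f \<Longrightarrow> aff_on X' f" unfolding aff_on_def X'_def by blast
  have "\<exists>y. (\<forall>i\<in>I. 0 \<le> y i) \<and> (\<forall>x\<in>X'. t - \<epsilon>/2 \<le> a x + (\<Sum>i\<in>I. y i * h i x))"
    apply (rule insert.IH[OF \<open>compact X'\<close> \<open>cvx X'\<close>])
    using insert.prems affsub unfolding X'_def by auto
  then obtain y where y: "\<forall>i\<in>I. 0 \<le> y i" "\<forall>x\<in>X'. t - \<epsilon>/2 \<le> a x + (\<Sum>i\<in>I. y i * h i x)" by blast
  define a' where "a' = (\<lambda>x. a x + (\<Sum>i\<in>I. y i * h i x))"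
  have "aff_on X a'" unfolding aff_on_def
  proof (intro ballI allI impI)
    fix x x' u assume B: "x \<in> X" "x' \<in> X" "0 \<le> (u::real) \<and> u \<le> 1"
    let ?z = "\<lambda>e. u * x e + (1 - u) * x' e"
    have ha: "a ?z = u * a x + (1-u) * a x'" using insert.prems(3) B unfolding aff_on_def by blast
    have hi: "\<And>i. i \<in> I \<Longrightarrow> h i ?z = u * h i x + (1-u) * h i x'" using insert.prems(4) B unfolding aff_on_def by blast
    have "(\<Sum>i\<in>I. y i * h i ?z) = u * (\<Sum>i\<in>I. y i * h i x) + (1-u) * (\<Sum>i\<in>I. y i * h i x')"
    proof -
      have "(\<Sum>i\<in>I. y i * h i ?z) = (\<Sum>i\<in>I. u * (y i * h i x) + (1-u) * (y i * h i x'))"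
      proof (rule sum.cong[OF refl])
        fix i assume "i \<in> I"
        show "y i * h i ?z = u * (y i * h i x) + (1-u) * (y i * h i x')"
          by (subst hi[OF \<open>i \<in> I\<close>]) (simp add: algebra_simps)
      qed
      also have "\<dots> = u * (\<Sum>i\<in>I. y i * h i x) + (1-u) * (\<Sum>i\<in>I. y i * h i x')"
        by (simp add: sum.distrib sum_distrib_left)
      finally show ?thesis .
    qed
    thus "a' ?z = u * a' x + (1 - u) * a' x'" unfolding a'_def ha by (simp add: algebra_simps)
  qed
  have "continuous_on UNIV a'" unfolding a'_def using insert.prems(5,6)
    by (intro continuous_intros) auto
  have "\<exists>yj\<ge>0. \<forall>x\<in>X. (t - \<epsilon>/2) - \<epsilon>/2 \<le> a' x + yj * h j x"
    apply (rule one_dual[OF insert.prems(1,2) \<open>aff_on X a'\<close> _ \<open>continuous_on UNIV a'\<close>])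
    using insert.prems y(2) unfolding X'_def a'_def by auto
  then obtain yj where yj: "yj \<ge> 0" "\<forall>x\<in>X. t - \<epsilon> \<le> a' x + yj * h j x" by auto
  show ?case
  proof (intro exI[of _ "y(j := yj)"] conjI ballI)
    fix i assume "i \<in> insert j I" thus "0 \<le> (y(j := yj)) i" using y yj by auto
  next
    fix x assume "x \<in> X"
    have "(\<Sum>i\<in>insert j I. (y(j := yj)) i * h i x) = yj * h j x + (\<Sum>i\<in>I. y i * h i x)"
      using insert.hyps by (simp add: sum.insert) (intro sum.cong, auto)
    thus "t - \<epsilon> \<le> a x + (\<Sum>i\<in>insert j I. (y(j := yj)) i * h i x)"
      using yj(2) \<open>x \<in> X\<close> unfolding a'_def by force
  qed
qed



lemma sum_cont: "continuous_on UNIV (\<lambda>x::'e \<Rightarrow> real. \<Sum>e\<in>F. f e * x e)"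
  by (intro continuous_intros continuous_on_product_coordinates)

lemma sum_cont': "continuous_on UNIV (\<lambda>x::'e \<Rightarrow> real. sum x F)"
  by (intro continuous_intros continuous_on_product_coordinates)

theorem lemma7:
  fixes V :: "'v set" and E :: "'v set set" and c :: "'v set \<Rightarrow> real"
    and \<S> :: "'v set set" and b :: "'v set \<Rightarrow> int" and lam :: real
    and ystar :: "'v set \<Rightarrow> real"
  assumes "connected_graph V E"
    and "\<forall>e\<in>E. c e \<ge> 0"
    and "is_chain_family V \<S>"
    and "lam > 1"
    and "feas V E \<S> b 1 \<noteq> {}"
    and "\<forall>S\<in>\<S>. ystar S \<ge> 0"
    and "\<forall>y. (\<forall>S\<in>\<S>. y S \<ge> 0) \<longrightarrow> g_lag V E c \<S> b lam y \<le> g_lag V E c \<S> b lam ystar"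
  shows "(\<Sum>S\<in>\<S>. real_of_int (b S) * ystar S) \<le> (OPT V E c \<S> b 1 - OPT V E c \<S> b lam) / (lam - 1)"
proof -
  have finV: "finite V" and EV: "\<forall>e\<in>E. e \<subseteq> V" using assms(1) unfolding connected_graph_def graph_ok_def by auto
  have finE: "finite E" using finite_subset[of E "Pow V"] EV finV by auto
  have finS: "finite \<S>" using assms(3) unfolding is_chain_family_def by auto
  have ieE: "inner_edges E S \<subseteq> E" for S unfolding inner_edges_def by auto
  have ceE: "cut_edges E S \<subseteq> E" for S unfolding cut_edges_def by auto
  define r where "r x = (\<lambda>e. if e \<in> E then x e else 0)" for x :: "'v set \<Rightarrow> real"
  have sr: "F \<subseteq> E \<Longrightarrow> sum (r x) F = sum x F" for F x unfolding r_def by (intro sum.cong) auto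
  have lcr: "lin_cost E c (r x) = lin_cost E c x" for x unfolding r_def lin_cost_def by (intro sum.cong) auto
  have Pr: "x \<in> P_ST V E \<Longrightarrow> r x \<in> P_ST V E" for x
    unfolding P_ST_def using sr[OF ieE] sr[of E] by (auto simp: r_def)
  obtain x1 where x1: "x1 \<in> feas V E \<S> b 1" using assms(5) by blast
  have x1P: "x1 \<in> P_ST V E" using x1 unfolding feas_def by auto
  have Pnn: "x \<in> P_ST V E \<Longrightarrow> e \<in> E \<Longrightarrow> 0 \<le> x e" for x e unfolding P_ST_def by auto
  have cutnn: "x \<in> P_ST V E \<Longrightarrow> 0 \<le> sum x (cut_edges E S)" for x S
    using Pnn ceE by (meson subsetD sum_nonneg)
  have lcnn: "x \<in> P_ST V E \<Longrightarrow> 0 \<le> lin_cost E c x" for x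
    unfolding lin_cost_def using Pnn assms(2) by (intro sum_nonneg) auto
  have bnn: "S \<in> \<S> \<Longrightarrow> 0 \<le> b S" for S
    using x1 cutnn[OF x1P, of S] unfolding feas_def by fastforce
  define X where "X = {x \<in> P_ST V E. \<forall>e. e \<notin> E \<longrightarrow> x e = 0}"
  define h where "h S x = sum x (cut_edges E S) - lam * real_of_int (b S)" for S x
  define t where "t = OPT V E c \<S> b lam"
  define K where "K = PiE UNIV (\<lambda>e. if e \<in> E then {0..real (card V)} else {0::real})"
  have "compactin (product_topology (\<lambda>i. euclidean) UNIV) K"
    unfolding K_def compactin_PiE by auto
  hence "compact K" by (simp add: euclidean_product_topology)
  have XK: "X \<subseteq> K"
  proof
    fix x assume x: "x \<in> X"
    hence xP: "x \<in> P_ST V E" unfolding X_def by auto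
    { fix e assume e: "e \<in> E"
      have "x e \<le> sum x E" using member_le_sum[of e E x] e finE Pnn[OF xP] by auto
      also have "\<dots> \<le> real (card V)" using xP unfolding P_ST_def by auto
      finally have "x e \<le> real (card V)" . }
    thus "x \<in> K" using x Pnn[OF xP] unfolding K_def X_def by auto
  qed
  have "closed X"
  proof -
    have "X = {x. \<forall>e. e \<in> E \<longrightarrow> 0 \<le> x e} \<inter>
       {x. \<forall>S. S \<noteq> {} \<and> S \<subset> V \<longrightarrow> sum x (inner_edges E S) \<le> real (card S) - 1} \<inter>
       {x. sum x E = real (card V) - 1} \<inter> {x. \<forall>e. e \<notin> E \<longrightarrow> x e = 0}"
      unfolding X_def P_ST_def by auto
    also have "closed \<dots>"
      by (intro closed_Int closed_Collect_all closed_Collect_imp closed_Collect_le closed_Collect_eq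
          continuous_on_const sum_cont' continuous_on_product_coordinates) auto
    finally show ?thesis .
  qed
  have "compact X" using compact_Int_closed[OF \<open>compact K\<close> \<open>closed X\<close>] XK by (simp add: Int_absorb1)
  have combsum: "sum (\<lambda>e. (u::real) * (x::'v set \<Rightarrow> real) e + (1-u) * x' e) F = u * sum x F + (1-u) * sum x' F" for u x x' F
    by (simp only: sum.distrib sum_distrib_left)
  have "cvx X" unfolding cvx_def
  proof (intro ballI allI impI)
    fix x x' u assume B: "x \<in> X" "x' \<in> X" "0 \<le> (u::real) \<and> u \<le> 1"
    have i1: "\<forall>e\<in>E. 0 \<le> x e" "\<forall>e\<in>E. 0 \<le> x' e" using B unfolding X_def P_ST_def by auto
    have i2: "S \<noteq> {} \<and> S \<subset> V \<Longrightarrow> sum x (inner_edges E S) \<le> real (card S) - 1 \<and> sum x' (inner_edges E S) \<le> real (card S) - 1" for S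
      using B unfolding X_def P_ST_def by auto
    have i3: "sum x E = real (card V) - 1" "sum x' E = real (card V) - 1" using B unfolding X_def P_ST_def by auto
    have i4: "\<forall>e. e \<notin> E \<longrightarrow> x e = 0 \<and> x' e = 0" using B unfolding X_def by auto
    have "S \<noteq> {} \<and> S \<subset> V \<Longrightarrow> u * sum x (inner_edges E S) + (1-u) * sum x' (inner_edges E S) \<le> real (card S) - 1" for S
    proof -
      assume "S \<noteq> {} \<and> S \<subset> V"
      from i2[OF this] B have "u * sum x (inner_edges E S) + (1-u) * sum x' (inner_edges E S) \<le> u * (real (card S) - 1) + (1-u) * (real (card S) - 1)"
        by (intro add_mono mult_left_mono) auto
      thus ?thesis by (simp add: algebra_simps)
    qed
    hence c2: "\<forall>S. S \<noteq> {} \<and> S \<subset> V \<longrightarrow> sum (\<lambda>e. u * x e + (1 - u) * x' e) (inner_edges E S) \<le> real (card S) - 1"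
      by (simp only: combsum) blast
    have c3: "sum (\<lambda>e. u * x e + (1 - u) * x' e) E = real (card V) - 1"
      by (simp only: combsum i3) (simp add: algebra_simps)
    have c1: "\<forall>e\<in>E. 0 \<le> u * x e + (1 - u) * x' e" using i1 B by simp
    show "(\<lambda>e. u * x e + (1 - u) * x' e) \<in> X"
      unfolding X_def P_ST_def using c1 c2 c3 i4 by auto
  qed
  have "aff_on X (lin_cost E c)" unfolding aff_on_def
  proof (intro ballI allI impI)
    fix x x' u
    have eq: "\<And>e. c e * ((u::real) * x e + (1-u) * x' e) = u*(c e*x e) + (1-u)*(c e*x' e)"
      by (simp add: algebra_simps)
    show "lin_cost E c (\<lambda>e. u * x e + (1 - u) * x' e) = u * lin_cost E c x + (1 - u) * lin_cost E c x'"
      unfolding lin_cost_def eq by (simp only: sum.distrib sum_distrib_left)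
  qed
  have "\<forall>S\<in>\<S>. aff_on X (h S)" unfolding aff_on_def h_def
  proof (intro ballI allI impI)
    fix S x x' u
    show "sum (\<lambda>e. u * x e + (1 - u) * x' e) (cut_edges E S) - lam * real_of_int (b S) =
      u * (sum x (cut_edges E S) - lam * real_of_int (b S)) + (1 - u) * (sum x' (cut_edges E S) - lam * real_of_int (b S))"
      by (simp only: combsum) (simp add: algebra_simps)
  qed
  have "continuous_on UNIV (lin_cost E c)" unfolding lin_cost_def by (rule sum_cont)
  have "\<forall>S\<in>\<S>. continuous_on UNIV (h S)" unfolding h_def by (intro ballI continuous_intros sum_cont')
  have "r x1 \<in> X" using Pr[OF x1P] unfolding X_def r_def by auto
  moreover have "\<forall>S\<in>\<S>. h S (r x1) \<le> 0"
  proof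
    fix S assume S: "S \<in> \<S>"
    have "sum x1 (cut_edges E S) \<le> real_of_int (b S)" using x1 S unfolding feas_def by auto
    moreover have "real_of_int (b S) \<le> lam * real_of_int (b S)" proof -
      have "0 \<le> real_of_int (b S)" using bnn[OF S] by simp
      thus ?thesis using assms(4) by (intro mult_le_cancel_right1[THEN iffD2, of _ lam, simplified mult.commute]) auto
    qed
    ultimately show "h S (r x1) \<le> 0" unfolding h_def using sr[OF ceE] by simp
  qed
  ultimately have feasX: "\<exists>x\<in>X. \<forall>S\<in>\<S>. h S x \<le> 0" by blast
  have bddO: "bdd_below (lin_cost E c ` feas V E \<S> b l)" for l
    using lcnn unfolding feas_def bdd_below_def by blast
  have lbX: "\<forall>x\<in>X. (\<forall>S\<in>\<S>. h S x \<le> 0) \<longrightarrow> t \<le> lin_cost E c x"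
  proof (intro ballI impI)
    fix x assume "x \<in> X" "\<forall>S\<in>\<S>. h S x \<le> 0"
    hence "x \<in> feas V E \<S> b lam" unfolding feas_def X_def h_def by auto
    thus "t \<le> lin_cost E c x" unfolding t_def OPT_def by (intro cInf_lower bddO) auto
  qed
  define B where "B = (\<Sum>S\<in>\<S>. real_of_int (b S) * ystar S)"
  define L where "L y x = lin_cost E c x + (\<Sum>S\<in>\<S>. (sum x (cut_edges E S) - lam * real_of_int (b S)) * y S)" for y x
  have gL: "g_lag V E c \<S> b lam y = Inf (L y ` P_ST V E)" for y unfolding g_lag_def L_def by simp
  have Lr: "L y (r x) = L y x" for y x unfolding L_def lcr using sr[OF ceE] by simp
  have key: "t - \<epsilon> + (lam - 1) * B \<le> OPT V E c \<S> b 1" if ep: "\<epsilon> > 0" for \<epsilon>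
  proof -
    obtain y where y: "\<forall>S\<in>\<S>. 0 \<le> y S" "\<forall>x\<in>X. t - \<epsilon> \<le> lin_cost E c x + (\<Sum>S\<in>\<S>. y S * h S x)"
      using multi_dual[OF finS \<open>compact X\<close> \<open>cvx X\<close> \<open>aff_on X (lin_cost E c)\<close> \<open>\<forall>S\<in>\<S>. aff_on X (h S)\<close>
          \<open>continuous_on UNIV (lin_cost E c)\<close> \<open>\<forall>S\<in>\<S>. continuous_on UNIV (h S)\<close> feasX lbX ep] by blast
    have "t - \<epsilon> \<le> g_lag V E c \<S> b lam y" unfolding gL
    proof (rule cInf_greatest)
      show "L y ` P_ST V E \<noteq> {}" using x1P by auto
    next
      fix z assume "z \<in> L y ` P_ST V E"
      then obtain x where x: "x \<in> P_ST V E" "z = L y x" by auto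
      have "r x \<in> X" using Pr[OF x(1)] unfolding X_def r_def by auto
      hence "t - \<epsilon> \<le> L y (r x)" using y(2) unfolding L_def h_def by (simp add: mult.commute)
      thus "t - \<epsilon> \<le> z" using x Lr by simp
    qed
    also have "\<dots> \<le> g_lag V E c \<S> b lam ystar" using assms(7) y(1) by blast
    finally have tg: "t - \<epsilon> \<le> g_lag V E c \<S> b lam ystar" .
    have bddL: "bdd_below (L ystar ` P_ST V E)"
    proof -
      have "\<forall>x\<in>P_ST V E. (\<Sum>S\<in>\<S>. (- lam * real_of_int (b S)) * ystar S) \<le> L ystar x"
      proof
        fix x assume x: "x \<in> P_ST V E"
        have "(\<Sum>S\<in>\<S>. (- lam * real_of_int (b S)) * ystar S) \<le> (\<Sum>S\<in>\<S>. (sum x (cut_edges E S) - lam * real_of_int (b S)) * ystar S)"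
          using cutnn[OF x] assms(6) by (intro sum_mono mult_right_mono) auto
        thus "(\<Sum>S\<in>\<S>. (- lam * real_of_int (b S)) * ystar S) \<le> L ystar x" unfolding L_def using lcnn[OF x] by simp
      qed
      thus ?thesis unfolding bdd_below_def by blast
    qed
    have "t - \<epsilon> + (lam - 1) * B \<le> lin_cost E c x" if x: "x \<in> feas V E \<S> b 1" for x
    proof -
      have xP: "x \<in> P_ST V E" using x unfolding feas_def by auto
      have "g_lag V E c \<S> b lam ystar \<le> L ystar x" unfolding gL using xP bddL by (intro cInf_lower) auto
      also have "\<dots> \<le> lin_cost E c x + (\<Sum>S\<in>\<S>. (real_of_int (b S) - lam * real_of_int (b S)) * ystar S)"
      proof -
        have "(\<Sum>S\<in>\<S>. (sum x (cut_edges E S) - lam * real_of_int (b S)) * ystar S) \<le> (\<Sum>S\<in>\<S>. (real_of_int (b S) - lam * real_of_int (b S)) * ystar S)"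
        proof (rule sum_mono)
          fix S assume S: "S \<in> \<S>"
          have "sum x (cut_edges E S) \<le> real_of_int (b S)" using x S unfolding feas_def by auto
          thus "(sum x (cut_edges E S) - lam * real_of_int (b S)) * ystar S \<le> (real_of_int (b S) - lam * real_of_int (b S)) * ystar S"
            using assms(6) S by (intro mult_right_mono) auto
        qed
        thus ?thesis unfolding L_def by (rule add_left_mono)
      qed
      also have "(\<Sum>S\<in>\<S>. (real_of_int (b S) - lam * real_of_int (b S)) * ystar S) = - ((lam - 1) * B)"
        unfolding B_def by (simp add: sum_distrib_left sum_negf[symmetric] algebra_simps)
      finally show ?thesis using tg by simp
    qed
    thus ?thesis unfolding OPT_def using x1 by (intro cInf_greatest) auto
  qed
  have "t + (lam - 1) * B \<le> OPT V E c \<S> b 1"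
  proof (rule field_le_epsilon)
    fix e :: real assume "0 < e"
    from key[OF this] show "t + (lam - 1) * B \<le> OPT V E c \<S> b 1 + e" by linarith
  qed
  hence "B * (lam - 1) \<le> OPT V E c \<S> b 1 - t" by (simp add: mult.commute)
  hence "B \<le> (OPT V E c \<S> b 1 - t) / (lam - 1)" using assms(4) by (subst pos_le_divide_eq) auto
  thus ?thesis unfolding B_def t_def .
qed


end
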